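(* Let $0<p<1/2$ be a constant and let $T$ be a tree with $n$ edges accessed through a 2-sided noisy oracle with error probability $p$. Consider the following algorithm, run with parameters $\varepsilon=\delta=0.01$: set $c=\lceil \log_{\frac{1-p}{p}}(1/\delta)\rceil$ and a global budget $B=\lceil \frac{1}{\varepsilon}\cdot\frac{1}{1-2p}\rceil\cdot c\cdot n$; process the edges of $T$ in a fixed order; for the current edge, starting a counter at $0$, while the counter is $<c$ and $B>0$, query the edge, decrease $B$ by $1$, and add $+1$ to the counter on ``Yes'' and $-1$ on ``No''; after the loop, if $B=0$ output False and stop, otherwise continue to the next edge; if all edges are processed output True. Then this algorithm outputs True on connected trees with probability at least $0.99$, outputs False on disconnected trees with probability at least $0.99$, and uses $O(n)$ queries.
   Context: Noisy edge-query model: each edge is either realized or non-realized (fixed arbitrarily in advance). An oracle answers queries ``Is edge $e$ realized?'' with ``Yes''/``No''; each query costs $1$; answers to distinct queries (including repeated queries of the same edge) are independent. In the 2-sided error regime each answer is wrong with probability $p<1/2$ (a constant) and correct with probability $1-p$. A tree is connected if all its edges are realized and disconnected otherwise. *)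

theory Defs
  imports "HOL-Probability.Probability"
begin

text \<open>Every call is a fresh, independent draw.\<close>
definition noisy_answer :: "real \<Rightarrow> bool \<Rightarrow> bool pmf" where
  "noisy_answer p r = map_pmf (\<lambda>correct. if correct then r else \<not> r) (bernoulli_pmf (1 - p))"

fun edge_loop :: "real \<Rightarrow> nat \<Rightarrow> bool \<Rightarrow> nat \<Rightarrow> int \<Rightarrow> (nat \<times> int) pmf" where
  "edge_loop p c r 0 k = return_pmf (0, k)"
| "edge_loop p c r (Suc B) k =
     (if int c \<le> k then return_pmf (Suc B, k)
      else bind_pmf (noisy_answer p r)
             (\<lambda>a. edge_loop p c r B (if a then k + 1 else k - 1)))"

fun process :: "real \<Rightarrow> nat \<Rightarrow> ('e \<Rightarrow> bool) \<Rightarrow> 'e list \<Rightarrow> nat \<Rightarrow> (bool \<times> nat) pmf" where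
  "process p c rl [] B = return_pmf (True, B)"
| "process p c rl (e # es) B =
     bind_pmf (edge_loop p c (rl e) B 0)
       (\<lambda>(B', k). if B' = 0 then return_pmf (False, 0) else process p c rl es B')"

definition alg_c :: "real \<Rightarrow> real \<Rightarrow> nat" where
  "alg_c p \<delta> = nat \<lceil>log ((1 - p) / p) (1 / \<delta>)\<rceil>"

definition alg_budget :: "real \<Rightarrow> real \<Rightarrow> real \<Rightarrow> nat \<Rightarrow> nat" where
  "alg_budget p \<epsilon> \<delta> n = nat \<lceil>(1 / \<epsilon>) * (1 / (1 - 2 * p))\<rceil> * alg_c p \<delta> * n"

definition noisy_tree_test ::
  "real \<Rightarrow> real \<Rightarrow> real \<Rightarrow> ('e \<Rightarrow> bool) \<Rightarrow> 'e list \<Rightarrow> (bool \<times> nat) pmf" where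
  "noisy_tree_test p \<epsilon> \<delta> rl es =
     (let B = alg_budget p \<epsilon> \<delta> (length es)
      in map_pmf (\<lambda>(out, B'). (out, B - B')) (process p (alg_c p \<delta>) rl es B))"

definition tree_connected :: "('e \<Rightarrow> bool) \<Rightarrow> 'e list \<Rightarrow> bool" where
  "tree_connected rl es \<longleftrightarrow> (\<forall>e\<in>set es. rl e)"

end

theory Submission
  imports Defs
begin

abbreviation E :: "'a pmf \<Rightarrow> ('a \<Rightarrow> real) \<Rightarrow> real" where
  "E M f \<equiv> measure_pmf.expectation M f"

lemma int_bind_bounded:
  fixes f :: "'b \<Rightarrow> real"
  assumes "\<And>y. \<bar>f y\<bar> \<le> C"
  shows "E (bind_pmf M N) f = E M (\<lambda>x. E (N x) f)"
proof -
  have m: "(\<lambda>x. measure_pmf (N x)) \<in> measurable (measure_pmf M) (subprob_algebra (count_space UNIV))"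
    by (subst measurable_cong_sets[where M'="count_space UNIV" and N'="subprob_algebra (count_space UNIV)"]) (auto simp add: space_subprob_algebra intro: subprob_space_measure_pmf)
  show ?thesis
  unfolding measure_pmf_bind
  apply (rule integral_bind[where K="count_space UNIV" and B=C and B'=1])
  using assms m apply auto
  done
qed

lemma int_bind_pmf:
  fixes f :: "'b \<Rightarrow> real"
  assumes "\<And>y. y \<in> set_pmf (bind_pmf M N) \<Longrightarrow> \<bar>f y\<bar> \<le> C"
  shows "E (bind_pmf M N) f = E M (\<lambda>x. E (N x) f)"
proof -
  define g where "g y = max (-C) (min C (f y))" for y
  have C: "0 \<le> C" if "y \<in> set_pmf (bind_pmf M N)" for y using assms[OF that] by linarith
  have "E (bind_pmf M N) f = E (bind_pmf M N) g"
    apply (rule integral_cong_AE) apply simp apply simp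
    unfolding AE_measure_pmf_iff using assms by (fastforce simp: g_def)
  also have "\<dots> = E M (\<lambda>x. E (N x) g)"
    apply (rule int_bind_bounded[where C="\<bar>C\<bar>"]) by (auto simp: g_def)
  also have "\<dots> = E M (\<lambda>x. E (N x) f)"
    apply (rule integral_cong_AE) apply simp apply simp
    unfolding AE_measure_pmf_iff
    apply (intro ballI integral_cong_AE) apply simp apply simp
    unfolding AE_measure_pmf_iff
  proof (intro ballI)
    fix x y assume "x \<in> set_pmf M" "y \<in> set_pmf (N x)"
    hence "\<bar>f y\<bar> \<le> C" using assms by auto
    thus "g y = f y" by (auto simp: g_def)
  qed
  finally show ?thesis .
qed

lemma prob_bind_pmf:
  "measure_pmf.prob (bind_pmf M N) A = E M (\<lambda>x. measure_pmf.prob (N x) A)"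
proof -
  have "measure_pmf.prob (bind_pmf M N) A = E (bind_pmf M N) (indicator A)" by simp
  also have "\<dots> = E M (\<lambda>x. E (N x) (indicator A))"
    by (rule int_bind_pmf[where C=1]) (auto simp: indicator_def)
  finally show ?thesis by simp
qed


lemma E_return[simp]: "E (return_pmf x) f = f x"
  by (subst integral_measure_pmf_real[where A="{x}"]) auto

lemma noisy_False: "bind_pmf (noisy_answer p False) g = bind_pmf (bernoulli_pmf (1-p)) (\<lambda>b. g (\<not> b))"
  unfolding noisy_answer_def bind_map_pmf by (intro bind_pmf_cong) auto

lemma noisy_True: "bind_pmf (noisy_answer p True) g = bind_pmf (bernoulli_pmf (1-p)) g"
  unfolding noisy_answer_def bind_map_pmf by (intro bind_pmf_cong) auto

lemma edge_false:
  assumes p: "0 < p" "p < 1/2"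
  shows "measure_pmf.prob (edge_loop p c False B k) {x. fst x \<noteq> 0} \<le> (p/(1-p)) ^ nat (int c - k)"
proof (induction B arbitrary: k)
  case 0
  show ?case using p by simp
next
  case (Suc B)
  show ?case
  proof (cases "int c \<le> k")
    case True
    then show ?thesis by simp
  next
    case False
    define q where "q = p/(1-p)"
    define m where "m = nat (int c - k - 1)"
    have n1: "nat (int c - k) = Suc m" "nat (int c - (k+1)) = m" "nat (int c - (k-1)) = Suc (Suc m)"
      using False by (auto simp: m_def)
    let ?P = "\<lambda>j. measure_pmf.prob (edge_loop p c False B j) {x. fst x \<noteq> 0}"
    have "measure_pmf.prob (edge_loop p c False (Suc B) k) {x. fst x \<noteq> 0}
        = E (bernoulli_pmf (1-p)) (\<lambda>b. ?P (if \<not> b then k + 1 else k - 1))"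
      using False by (simp add: noisy_False prob_bind_pmf)
    also have "\<dots> = (1-p) * ?P (k-1) + p * ?P (k+1)"
      using p by simp
    also have "\<dots> \<le> (1-p) * q ^ Suc (Suc m) + p * q ^ m"
      using Suc.IH[of "k-1"] Suc.IH[of "k+1"] p n1 unfolding q_def
      by (intro add_mono mult_left_mono) auto
    also have "\<dots> = q ^ m * ((1-p) * q * q + p)" by (simp add: algebra_simps)
    also have "(1-p) * q * q + p = q"
    proof -
      have "(1-p) * q = p" using p by (simp add: q_def)
      hence "(1-p) * q * q + p = p * q + p" by (simp only:)
      also have "\<dots> = p * (q + 1)" by (simp add: algebra_simps)
      also have "q + 1 = 1/(1-p)" using p by (simp add: q_def field_simps)
      finally show ?thesis by (simp add: q_def)
    qed
    finally show ?thesis using n1 by (simp add: q_def mult.commute)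
  qed
qed


lemma edge_fin: "finite (set_pmf (edge_loop p c r B k))"
  by (induction B arbitrary: k) auto

lemma edge_supp: "x \<in> set_pmf (edge_loop p c r B k) \<Longrightarrow> fst x \<le> B"
  by (induction B arbitrary: k) (force split: if_splits intro: le_SucI)+

lemma process_supp: "x \<in> set_pmf (process p c rl es B) \<Longrightarrow> snd x \<le> B"
  by (induction es arbitrary: B) (fastforce split: if_splits dest: edge_supp intro: le_trans)+

lemma process_supp0: "x \<in> set_pmf (process p c rl es B) \<Longrightarrow> \<not> fst x \<Longrightarrow> snd x = 0"
  by (induction es arbitrary: B) (auto split: if_splits)

lemma fin_int: "finite (set_pmf M) \<Longrightarrow> integrable (measure_pmf M) (f :: _ \<Rightarrow> real)"
  by (simp add: integrable_measure_pmf_finite)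

lemma bdd_int: "(\<And>x. \<bar>f x\<bar> \<le> C) \<Longrightarrow> integrable (measure_pmf M) (f :: _ \<Rightarrow> real)"
  by (rule measure_pmf.integrable_const_bound[where B=C]) auto

lemma process_false:
  assumes p: "0 < p" "p < 1/2"
  shows "(\<exists>e\<in>set es. \<not> rl e) \<Longrightarrow> measure_pmf.prob (process p c rl es B) {x. fst x} \<le> (p/(1-p)) ^ c"
proof (induction es arbitrary: B)
  case Nil
  then show ?case by simp
next
  case (Cons e es)
  let ?g = "\<lambda>y. measure_pmf.prob ((\<lambda>(B', k). if B' = 0 then return_pmf (False, 0) else process p c rl es B') y) {x. fst x}"
  have eq: "measure_pmf.prob (process p c rl (e # es) B) {x. fst x} = E (edge_loop p c (rl e) B 0) ?g"
    by (simp add: prob_bind_pmf)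
  have q0: "0 \<le> (p/(1-p)) ^ c" using p by simp
  have q1: "(p/(1-p)) ^ c \<le> 1" using p by (intro power_le_one) auto
  show ?case
  proof (cases "rl e")
    case False
    have "E (edge_loop p c (rl e) B 0) ?g \<le> E (edge_loop p c (rl e) B 0) (indicator {x. fst x \<noteq> 0})"
      by (intro integral_mono bdd_int[where C=1]) (auto simp: indicator_def)
    also have "\<dots> = measure_pmf.prob (edge_loop p c False B 0) {x. fst x \<noteq> 0}" using False by simp
    also have "\<dots> \<le> (p/(1-p)) ^ nat (int c - 0)" by (rule edge_false[OF p])
    finally show ?thesis using eq by simp
  next
    case True
    with Cons.prems have ex: "\<exists>e\<in>set es. \<not> rl e" by auto
    have "E (edge_loop p c (rl e) B 0) ?g \<le> E (edge_loop p c (rl e) B 0) (\<lambda>_. (p/(1-p)) ^ c)"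
      apply (intro integral_mono bdd_int[where C=1] bdd_int[where C="(p/(1-p)) ^ c"])
      using Cons.IH[OF ex] q0 q1 by (auto split: prod.splits)
    then show ?thesis using eq by simp
  qed
qed

lemma edge_true:
  assumes p: "0 < p" "p < 1/2"
  shows "k \<le> int c \<Longrightarrow> E (edge_loop p c True B k) (\<lambda>x. real (fst x)) \<ge> real B - real_of_int (int c - k) / (1 - 2*p)"
proof (induction B arbitrary: k)
  case 0
  then show ?case using p by simp
next
  case (Suc B)
  show ?case
  proof (cases "int c \<le> k")
    case True
    then show ?thesis using p Suc.prems by simp
  next
    case False
    let ?P = "\<lambda>j. E (edge_loop p c True B j) (\<lambda>x. real (fst x))"
    have "E (edge_loop p c True (Suc B) k) (\<lambda>x. real (fst x))
        = E (bernoulli_pmf (1-p)) (\<lambda>b. ?P (if b then k + 1 else k - 1))"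
      using False apply (simp add: noisy_True)
      by (rule int_bind_pmf[where C="real B"]) (auto dest!: edge_supp)
    also have "\<dots> = (1-p) * ?P (k+1) + p * ?P (k-1)"
      using p by simp
    finally have eq: "E (edge_loop p c True (Suc B) k) (\<lambda>x. real (fst x)) = (1-p) * ?P (k+1) + p * ?P (k-1)" .
    define d where "d = real_of_int (int c - k)"
    have d1: "real_of_int (int c - (k+1)) = d - 1" "real_of_int (int c - (k-1)) = d + 1" by (simp_all add: d_def)
    have h1: "?P (k+1) \<ge> real B - (d - 1) / (1 - 2*p)" using Suc.IH[of "k+1"] False unfolding d1 by simp
    have h2: "?P (k-1) \<ge> real B - (d + 1) / (1 - 2*p)" using Suc.IH[of "k-1"] False unfolding d1 by simp
    have "(1-p) * ?P (k+1) + p * ?P (k-1) \<ge> (1-p) * (real B - (d - 1) / (1 - 2*p)) + p * (real B - (d + 1) / (1 - 2*p))"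
      using h1 h2 p by (intro add_mono mult_left_mono) auto
    moreover have "(1-p) * (real B - (d - 1) / (1 - 2*p)) + p * (real B - (d + 1) / (1 - 2*p)) = real (Suc B) - d / (1 - 2*p)"
    proof -
      have t: "1 - 2*p \<noteq> 0" using p by simp
      have a: "(d - 1) / (1 - 2*p) = d / (1 - 2*p) - 1 / (1 - 2*p)" "(d + 1) / (1 - 2*p) = d / (1 - 2*p) + 1 / (1 - 2*p)"
        by (simp_all add: diff_divide_distrib add_divide_distrib)
      have b: "(1 - 2*p) * (1 / (1 - 2*p)) = 1" using t by simp
      have g: "\<And>x y. (1-2*p)*y = 1 \<Longrightarrow> (1-p)*(real B - (x - y)) + p*(real B - (x+y)) = real (Suc B) - x"
        by simp algebra
      show ?thesis unfolding a by (rule g[OF b])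
    qed
    ultimately show ?thesis using eq by (simp add: d_def)
  qed
qed

lemma process_true:
  assumes p: "0 < p" "p < 1/2"
  shows "(\<forall>e\<in>set es. rl e) \<Longrightarrow> E (process p c rl es B) (\<lambda>x. real (snd x)) \<ge> real B - real (length es) * real c / (1 - 2*p)"
proof (induction es arbitrary: B)
  case Nil
  then show ?case by simp
next
  case (Cons e es)
  define m where "m = real (length es) * real c / (1 - 2*p)"
  have m0: "m \<ge> 0" using p by (simp add: m_def)
  let ?g = "\<lambda>y. E ((\<lambda>(B', k). if B' = 0 then return_pmf (False, 0) else process p c rl es B') y) (\<lambda>x. real (snd x))"
  have e1: "E (process p c rl (e # es) B) (\<lambda>x. real (snd x)) = E (edge_loop p c True B 0) ?g"
    using Cons.prems apply simp
    by (rule int_bind_pmf[where C="real B"]) (auto split: if_splits dest!: process_supp edge_supp)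
  have e2: "E (edge_loop p c True B 0) ?g \<ge> E (edge_loop p c True B 0) (\<lambda>y. real (fst y) - m)"
    apply (intro integral_mono fin_int edge_fin)
    using Cons.IH[where B="fst _"] Cons.prems m0 by (auto simp: m_def split: prod.splits)
  have e3: "E (edge_loop p c True B 0) (\<lambda>y. real (fst y) - m) = E (edge_loop p c True B 0) (\<lambda>y. real (fst y)) - m"
    by (simp add: fin_int edge_fin)
  have e4: "E (edge_loop p c True B 0) (\<lambda>y. real (fst y)) \<ge> real B - real c / (1 - 2*p)"
    using edge_true[OF p, of 0 c B] by simp
  have "real (length (e # es)) * real c / (1 - 2*p) = real c / (1 - 2*p) + m"
    by (simp add: m_def add_divide_distrib[symmetric] algebra_simps)
  then show ?case using e1 e2 e3 e4 by linarith
qed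


lemma process_fin: "finite (set_pmf (process p c rl es B))"
  by (induction es arbitrary: B) (auto simp: edge_fin split: if_splits)

lemma c_facts:
  assumes p: "0 < p" "p < 1/2"
  shows "alg_c p 0.01 \<ge> 1" "(p/(1-p)) ^ alg_c p 0.01 \<le> 1/100"
proof -
  define b where "b = (1-p)/p"
  have b1: "b > 1" using p by (simp add: b_def field_simps)
  have cdef: "alg_c p 0.01 = nat \<lceil>log b 100\<rceil>" by (simp add: alg_c_def b_def)
  have lpos: "log b 100 > 0" using b1 by simp
  hence cge: "real (alg_c p 0.01) \<ge> log b 100" unfolding cdef by linarith
  show "alg_c p 0.01 \<ge> 1" using lpos unfolding cdef by linarith
  have "100 = b powr log b 100" using b1 by simp
  also have "\<dots> \<le> b powr real (alg_c p 0.01)" using cge b1 by (intro powr_mono) auto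
  also have "\<dots> = b ^ alg_c p 0.01" using b1 by (simp add: powr_realpow)
  finally have h: "100 \<le> b ^ alg_c p 0.01" .
  have "p/(1-p) = 1/b" by (simp add: b_def)
  hence "(p/(1-p)) ^ alg_c p 0.01 = 1 / b ^ alg_c p 0.01" by (simp add: power_one_over)
  also have "\<dots> \<le> 1/100" using h by (intro divide_left_mono) auto
  finally show "(p/(1-p)) ^ alg_c p 0.01 \<le> 1/100" .
qed


theorem corollary1:
  fixes p :: real
  assumes "0 < p" and "p < 1/2"
  shows "(\<forall>(rl :: 'e \<Rightarrow> bool) (es :: 'e list). distinct es \<longrightarrow> tree_connected rl es \<longrightarrow>
            measure_pmf.prob (noisy_tree_test p 0.01 0.01 rl es) {x. fst x} \<ge> 0.99)
       \<and> (\<forall>(rl :: 'e \<Rightarrow> bool) (es :: 'e list). distinct es \<longrightarrow> \<not> tree_connected rl es \<longrightarrow>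
            measure_pmf.prob (noisy_tree_test p 0.01 0.01 rl es) {x. \<not> fst x} \<ge> 0.99)
       \<and> (\<exists>K::real. \<forall>(rl :: 'e \<Rightarrow> bool) (es :: 'e list).
            \<forall>x\<in>set_pmf (noisy_tree_test p 0.01 0.01 rl es). real_of_nat (snd x) \<le> K * length es)"
proof -
  note p = assms
  define c where "c = alg_c p 0.01"
  define N where "N = nat \<lceil>(1 / (0.01::real)) * (1 / (1 - 2 * p))\<rceil>"
  have Bdef: "\<And>n. alg_budget p (1/100) (1/100) n = N * alg_c p (1/100) * n" by (simp add: alg_budget_def N_def c_def)
  have c1: "c \<ge> 1" and qc: "(p/(1-p)) ^ c \<le> 1/100" using c_facts[OF p] by (auto simp: c_def)
  have t: "1 - 2*p > 0" using p by simp
  have Nge: "real N * (1 - 2*p) \<ge> 100"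
  proof -
    have "real N \<ge> 100 / (1 - 2*p)" unfolding N_def by simp linarith
    thus ?thesis using t by (simp add: field_simps)
  qed
  have Mtest: "\<And>rl es A. measure_pmf.prob (noisy_tree_test p 0.01 0.01 rl es) A
      = measure_pmf.prob (process p c rl es (N * c * length es)) ((\<lambda>(out, B'). (out, N * c * length es - B')) -` A)"
    by (simp add: noisy_tree_test_def Bdef c_def Let_def)
  have part1: "measure_pmf.prob (noisy_tree_test p 0.01 0.01 rl es) {x. fst x} \<ge> 0.99"
    if conn: "tree_connected rl es" for rl :: "'e \<Rightarrow> bool" and es
  proof (cases "es = []")
    case True
    then show ?thesis by (simp add: noisy_tree_test_def)
  next
    case False
    define n where "n = length es"
    define B where "B = N * c * n"
    let ?P = "process p c rl es B"
    define \<pi> where "\<pi> = measure_pmf.prob ?P {x. fst x}"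
    have n1: "n \<ge> 1" using False by (simp add: n_def Suc_le_eq)
    have eqp: "measure_pmf.prob (noisy_tree_test p 0.01 0.01 rl es) {x. fst x} = \<pi>"
      unfolding Mtest \<pi>_def B_def n_def by (intro arg_cong[where f="measure_pmf.prob _"]) auto
    have lo: "E ?P (\<lambda>x. real (snd x)) \<ge> real B - real n * real c / (1 - 2*p)"
      using process_true[OF p, where es=es and rl=rl and c=c and B=B] conn by (simp add: tree_connected_def n_def)
    have "E ?P (\<lambda>x. real (snd x)) \<le> E ?P (\<lambda>x. real B * indicator {x. fst x} x)"
      apply (rule integral_mono_AE)
        apply (simp_all add: fin_int process_fin)
      unfolding AE_measure_pmf_iff
      using process_supp[of _ p c rl es B] process_supp0[of _ p c rl es B]
      by (auto simp: indicator_def)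
    also have "\<dots> = real B * \<pi>" by (simp add: \<pi>_def)
    finally have hi: "E ?P (\<lambda>x. real (snd x)) \<le> real B * \<pi>" .
    have key: "real B * \<pi> \<ge> real B - real n * real c / (1 - 2*p)" using lo hi by linarith
    have Npos: "N > 0" using Nge by (cases "N = 0") auto
    have Bpos: "real B > 0" using n1 c1 Npos by (auto simp: B_def)
    have "real n * real c / (1 - 2*p) \<le> real B / 100"
    proof -
      have "real n * real c = real n * real c * 1" by simp
      have "real B / 100 = real n * real c * (real N / 100)" by (simp add: B_def)
      moreover have "real N / 100 \<ge> 1 / (1 - 2*p)" using Nge t by (simp add: field_simps)
      moreover have "real n * real c / (1 - 2*p) = real n * real c * (1 / (1 - 2*p))" by simp
      moreover have "real n * real c * (1 / (1 - 2*p)) \<le> real n * real c * (real N / 100)"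
        using calculation(2) by (intro mult_left_mono) auto
      ultimately show ?thesis by simp
    qed
    hence "real B * \<pi> \<ge> real B * 0.99" using key by simp
    hence "\<pi> \<ge> 0.99" using Bpos by simp
    thus ?thesis using eqp by simp
  qed
  have part2: "measure_pmf.prob (noisy_tree_test p 0.01 0.01 rl es) {x. \<not> fst x} \<ge> 0.99"
    if nc: "\<not> tree_connected rl es" for rl :: "'e \<Rightarrow> bool" and es
  proof -
    define B where "B = N * c * length es"
    let ?P = "process p c rl es B"
    have eqp: "measure_pmf.prob (noisy_tree_test p 0.01 0.01 rl es) {x. \<not> fst x} = measure_pmf.prob ?P (UNIV - {x. fst x})"
      unfolding Mtest B_def by (intro arg_cong[where f="measure_pmf.prob _"]) auto
    have "measure_pmf.prob ?P {x. fst x} \<le> 1/100"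
      using process_false[OF p, where es=es and rl=rl and c=c and B=B] nc qc by (auto simp: tree_connected_def)
    moreover have "measure_pmf.prob ?P (UNIV - {x. fst x}) = 1 - measure_pmf.prob ?P {x. fst x}"
      using measure_pmf.prob_compl[of "{x. fst x}" ?P] by simp
    ultimately show ?thesis using eqp by simp
  qed
  have part3: "real_of_nat (snd x) \<le> real (N * c) * length es"
    if "x \<in> set_pmf (noisy_tree_test p 0.01 0.01 rl es)" for x and rl :: "'e \<Rightarrow> bool" and es
    using that apply (auto simp: noisy_tree_test_def Bdef c_def Let_def)
    by (metis diff_le_self of_nat_le_iff of_nat_mult)
  show ?thesis using part1 part2 part3 by blast
qed

end
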